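(* Let $k > 1$ be an integer and let $p > 2k+1$ be a prime such that $p$ divides $\mathrm{num}\!\left(\frac{2^{2k}(2^{2k-1}-1)}{(2k)!}B_k\right)$. Then $p$ divides $t_k = a_k\, 2^{2k-2}(2^{2k-1}-1)\,\mathrm{num}\!\left(\frac{B_k}{4k}\right)$, where $a_k = 1$ if $k$ is even and $a_k = 2$ if $k$ is odd.
   Context: $B_k$ denotes the $k$-th Bernoulli number in the convention of Hirzebruch and Milnor–Kervaire ($B_1 = 1/6$, $B_2 = 1/30$, $B_3 = 1/42, \dots$; i.e. $B_k = |b_{2k}|$ where $t/(e^t-1)=\sum b_m t^m/m!$). For a rational number $a/b$, $\mathrm{num}(a/b)$ denotes the numerator of $a/b$ written in lowest terms. (The integer $t_k$ is the order of the group of homotopy $(4k-1)$-spheres bounding parallelizable manifolds.) *)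

theory Defs
  imports Complex_Main "HOL-Computational_Algebra.Primes"
begin

text \<open>Bernoulli numbers b_m in the convention t/(e^t-1) = sum b_m t^m/m!,
  given by the standard recursion b_0 = 1, sum_{j=0}^{m} C(m+1,j) b_j = 0 for m >= 1.\<close>
fun bern :: "nat \<Rightarrow> rat" where
  "bern n = (if n = 0 then 1
             else - (\<Sum>j<n. of_nat (Suc n choose j) * bern j) / of_nat (Suc n))"

text \<open>Hirzebruch / Milnor--Kervaire convention: B_k = |b_{2k}| (B_1 = 1/6, B_2 = 1/30, ...).\<close>
definition BMK :: "nat \<Rightarrow> rat" where
  "BMK k = \<bar>bern (2 * k)\<bar>"

definition rat_num :: "rat \<Rightarrow> int" where
  "rat_num q = fst (quotient_of q)"

definition a_coef :: "nat \<Rightarrow> int" where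
  "a_coef k = (if even k then 1 else 2)"

definition t_k :: "nat \<Rightarrow> int" where
  "t_k k = a_coef k * 2 ^ (2 * k - 2) * (2 ^ (2 * k - 1) - 1) * rat_num (BMK k / of_nat (4 * k))"

end

theory Submission
  imports Defs
begin

lemma num_dvd:
  fixes a b :: int
  assumes "b \<noteq> 0"
  shows "rat_num (of_int a / of_int b) dvd a"
proof -
  obtain n d where q: "quotient_of (of_int a / of_int b :: rat) = (n, d)" by (cases "quotient_of (of_int a / of_int b :: rat)") auto
  have x: "(of_int a / of_int b :: rat) = of_int n / of_int d" using quotient_of_div[OF q] .
  have dp: "d > 0" using quotient_of_denom_pos[OF q] .
  have cop: "coprime n d" using quotient_of_coprime[OF q] .
  have "(of_int a :: rat) * of_int d = of_int n * of_int b"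
    using x assms dp by (simp add: frac_eq_eq)
  hence "a * d = n * b" by (metis of_int_eq_iff of_int_mult)
  hence "n dvd a * d" by (metis dvd_triv_left)
  hence "n dvd a" using cop by (simp add: coprime_dvd_mult_left_iff)
  thus ?thesis using q by (simp add: rat_num_def)
qed

lemma num_mult_dvd:
  fixes A F :: int and q :: rat
  assumes "F \<noteq> 0"
  shows "rat_num (of_int A / of_int F * q) dvd A * rat_num q"
proof -
  obtain n d where q: "quotient_of q = (n, d)" by (cases "quotient_of q") auto
  have x: "q = of_int n / of_int d" using quotient_of_div[OF q] .
  have dp: "d > 0" using quotient_of_denom_pos[OF q] .
  have "of_int A / of_int F * q = of_int (A * n) / of_int (F * d)" using x by simp
  moreover have "F * d \<noteq> 0" using assms dp by simp
  ultimately show ?thesis using num_dvd[of "F*d" "A*n"] q by (simp add: rat_num_def)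
qed

lemma num_div_dvd:
  fixes m :: nat and q :: rat
  assumes "m > 0"
  shows "rat_num q dvd rat_num (q / of_nat m) * int m"
proof -
  define y where "y = q / of_nat m"
  obtain n d where q: "quotient_of y = (n, d)" by (cases "quotient_of y") auto
  have x: "y = of_int n / of_int d" using quotient_of_div[OF q] .
  have dp: "d > 0" using quotient_of_denom_pos[OF q] .
  have "q = of_int (n * int m) / of_int d" using x assms unfolding y_def by (simp add: field_simps)
  hence "rat_num q dvd n * int m" using num_dvd[of d "n * int m"] dp by simp
  thus ?thesis using q by (simp add: rat_num_def y_def)
qed

theorem proposition3p13:
  fixes k p :: nat
  assumes "k > 1"
    and "prime p"
    and "p > 2 * k + 1"
    and "int p dvd rat_num (2 ^ (2 * k) * (2 ^ (2 * k - 1) - 1) / fact (2 * k) * BMK k)"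
  shows "int p dvd t_k k"
proof -
  define A :: int where "A = 2 ^ (2 * k) * (2 ^ (2 * k - 1) - 1)"
  define F :: int where "F = fact (2 * k)"
  have eq: "(2 ^ (2 * k) * (2 ^ (2 * k - 1) - 1) / fact (2 * k) * BMK k :: rat)
      = of_int A / of_int F * BMK k" unfolding A_def F_def by simp
  have "F \<noteq> 0" unfolding F_def by simp
  hence "int p dvd A * rat_num (BMK k)"
    using assms(4) num_mult_dvd[of F A "BMK k"] eq by (metis dvd_trans)
  have pp: "prime (int p)" using assms(2) by simp
  have p2: "\<not> int p dvd 2"
  proof
    assume "int p dvd 2"
    hence "p dvd 2" by presburger
    hence "p \<le> 2" by (simp add: dvd_imp_le)
    thus False using assms by simp
  qed
  have "\<not> int p dvd 2 ^ (2*k)" using pp p2 prime_dvd_power by blast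
  hence cases: "int p dvd (2 ^ (2 * k - 1) - 1) \<or> int p dvd rat_num (BMK k)"
    using \<open>int p dvd A * rat_num (BMK k)\<close> pp unfolding A_def
    by (metis prime_dvd_mult_iff)
  show ?thesis
  proof (cases "int p dvd (2 ^ (2 * k - 1) - 1)")
    case True
    thus ?thesis unfolding t_k_def by (simp add: mult.assoc)
  next
    case False
    hence h: "int p dvd rat_num (BMK k)" using cases by blast
    have m: "4 * k > 0" using assms by simp
    have "int p dvd rat_num (BMK k / of_nat (4*k)) * int (4*k)"
      using dvd_trans[OF h num_div_dvd[OF m]] .
    moreover have "\<not> int p dvd int (4*k)"
    proof
      assume "int p dvd int (4*k)"
      hence "p dvd 4 * k" by presburger
      hence "p \<le> 4 * k" using m by (simp add: dvd_imp_le)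
      moreover have "coprime p 4"
      proof -
        have "\<not> p dvd 4"
        proof
          assume "p dvd 4" hence "p \<le> 4" by (simp add: dvd_imp_le) thus False using assms by simp
        qed
        thus ?thesis using assms(2) by (simp add: prime_imp_coprime)
      qed
      ultimately have "p dvd k" using \<open>p dvd 4 * k\<close> by (simp add: coprime_dvd_mult_right_iff)
      hence "p \<le> k" using assms by (simp add: dvd_imp_le)
      thus False using assms by simp
    qed
    ultimately have "int p dvd rat_num (BMK k / of_nat (4*k))" using pp
      by (metis prime_dvd_mult_iff)
    thus ?thesis unfolding t_k_def by simp
  qed
qed

end
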